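(* Let $\Lambda$ be a lattice of rank $k\le 3$ with a positive definite quadratic form. If a list of $k$ vectors attains the successive minima of $\Lambda$, then these vectors form a basis of $\Lambda$. The same holds for $k=4$ if additionally $\Lambda$ is an order in $B_p$ (with quadratic form the reduced norm), where $p$ is an odd prime and $B_p$ is the quaternion algebra over $\mathbb{Q}$ ramified exactly at $p$ and $\infty$.
   Context: For a lattice $\Lambda$ of rank $k$ with positive definite quadratic form $Q$ and $1\le i\le k$, the $i$-th successive minimum is the minimum value $D_i$ such that the $\mathbb{Z}$-module generated by $\{v\in\Lambda:Q(v)\le D_i\}$ has rank at least $i$. An ordered list $v_1,\dots,v_k\in\Lambda$ attains the successive minima if it is linearly independent and $Q(v_i)=D_i$ for each $i$. *)

theory Defs
  imports "HOL-Analysis.Analysis" "HOL-Number_Theory.Number_Theory"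
begin

definition zspan :: "'v::real_vector set \<Rightarrow> 'v set" where
  "zspan S = {(\<Sum>x\<in>F. real_of_int (c x) *\<^sub>R x) | F c. finite F \<and> F \<subseteq> S}"

definition zindep :: "nat \<Rightarrow> (nat \<Rightarrow> 'v::real_vector) \<Rightarrow> bool" where
  "zindep k v \<longleftrightarrow> (\<forall>c::nat \<Rightarrow> int. (\<Sum>i<k. real_of_int (c i) *\<^sub>R v i) = 0 \<longrightarrow> (\<forall>i<k. c i = 0))"

definition rindep :: "nat \<Rightarrow> (nat \<Rightarrow> 'v::real_vector) \<Rightarrow> bool" where
  "rindep k b \<longleftrightarrow> (\<forall>c::nat \<Rightarrow> real. (\<Sum>i<k. c i *\<^sub>R b i) = 0 \<longrightarrow> (\<forall>i<k. c i = 0))"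

definition lattice_rank :: "'v::real_vector set \<Rightarrow> nat \<Rightarrow> bool" where
  "lattice_rank L k \<longleftrightarrow> (\<exists>b. rindep k b \<and> L = {(\<Sum>i<k. real_of_int (c i) *\<^sub>R b i) | c. True})"

definition pos_def_qf :: "'v::real_vector set \<Rightarrow> ('v \<Rightarrow> real) \<Rightarrow> bool" where
  "pos_def_qf L Q \<longleftrightarrow> (\<exists>\<beta>. bilinear \<beta> \<and> (\<forall>x. Q x = \<beta> x x))
      \<and> (\<forall>x\<in>span L. x \<noteq> 0 \<longrightarrow> Q x > 0)"

definition zrank_ge :: "'v::real_vector set \<Rightarrow> nat \<Rightarrow> bool" where
  "zrank_ge S i \<longleftrightarrow> (\<exists>w. (\<forall>j<i. w j \<in> zspan S) \<and> zindep i w)"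

definition is_succ_min :: "'v::real_vector set \<Rightarrow> ('v \<Rightarrow> real) \<Rightarrow> nat \<Rightarrow> real \<Rightarrow> bool" where
  "is_succ_min L Q i D \<longleftrightarrow> zrank_ge {x\<in>L. Q x \<le> D} i
      \<and> (\<forall>D'. zrank_ge {x\<in>L. Q x \<le> D'} i \<longrightarrow> D \<le> D')"

text \<open>The list v 0, ..., v (k-1) (i.e. v_1..v_k) attains the successive minima.\<close>
definition attains_succ_min :: "'v::real_vector set \<Rightarrow> ('v \<Rightarrow> real) \<Rightarrow> nat \<Rightarrow> (nat \<Rightarrow> 'v) \<Rightarrow> bool" where
  "attains_succ_min L Q k v \<longleftrightarrow> (\<forall>i<k. v i \<in> L) \<and> zindep k v
      \<and> (\<forall>i<k. is_succ_min L Q (Suc i) (Q (v i)))"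

definition is_basis_of :: "'v::real_vector set \<Rightarrow> nat \<Rightarrow> (nat \<Rightarrow> 'v) \<Rightarrow> bool" where
  "is_basis_of L k v \<longleftrightarrow> (\<forall>i<k. v i \<in> L) \<and> zindep k v
      \<and> L = {(\<Sum>i<k. real_of_int (c i) *\<^sub>R v i) | c. True}"

text \<open>Elements x = x1 + x2 i + x3 j + x4 k with i^2 = a, j^2 = b, k = ij = -ji,
  represented by their coordinates in real^4; the algebra over Q consists of the
  vectors with rational coordinates.\<close>

definition qmul :: "int \<Rightarrow> int \<Rightarrow> real^4 \<Rightarrow> real^4 \<Rightarrow> real^4" where
  "qmul a b x y = (\<chi> n.
     if n = 1 then x$1*y$1 + a*x$2*y$2 + b*x$3*y$3 - a*b*x$4*y$4
     else if n = 2 then x$1*y$2 + x$2*y$1 - b*x$3*y$4 + b*x$4*y$3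
     else if n = 3 then x$1*y$3 + x$3*y$1 + a*x$2*y$4 - a*x$4*y$2
     else x$1*y$4 + x$4*y$1 + x$2*y$3 - x$3*y$2)"

definition qone :: "real^4" where
  "qone = (\<chi> n. if n = 1 then 1 else 0)"

text \<open>Reduced norm x * conj x.\<close>
definition nrd :: "int \<Rightarrow> int \<Rightarrow> real^4 \<Rightarrow> real" where
  "nrd a b x = (x$1)^2 - a*(x$2)^2 - b*(x$3)^2 + a*b*(x$4)^2"

text \<open>(a,b) splits at the prime l: z^2 = a x^2 + b y^2 has a nontrivial l-adic
  solution, equivalently a primitive solution modulo l^n for every n.\<close>
definition splits_at :: "int \<Rightarrow> int \<Rightarrow> int \<Rightarrow> bool" where
  "splits_at a b l \<longleftrightarrow> (\<forall>n::nat. \<exists>x y z::int. \<not> (l dvd x \<and> l dvd y \<and> l dvd z)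
       \<and> [a*x^2 + b*y^2 = z^2] (mod l^n))"

text \<open>(a,b) is ramified exactly at p and infinity (definite, and non-split exactly at p).\<close>
definition ramified_exactly_at :: "int \<Rightarrow> int \<Rightarrow> int \<Rightarrow> bool" where
  "ramified_exactly_at a b p \<longleftrightarrow> a \<noteq> 0 \<and> b \<noteq> 0 \<and> a < 0 \<and> b < 0
     \<and> (\<forall>l. prime l \<longrightarrow> (\<not> splits_at a b l \<longleftrightarrow> l = p))"

definition is_order :: "int \<Rightarrow> int \<Rightarrow> (real^4) set \<Rightarrow> bool" where
  "is_order a b R \<longleftrightarrow> lattice_rank R 4 \<and> (\<forall>x\<in>R. \<forall>n. x$n \<in> \<rat>)
     \<and> qone \<in> R \<and> (\<forall>x\<in>R. \<forall>y\<in>R. qmul a b x y \<in> R)"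

end

theory Submission
  imports Defs
begin
definition zl :: "nat \<Rightarrow> (nat \<Rightarrow> 'v::real_vector) \<Rightarrow> 'v set" where
  "zl k b = {(\<Sum>i<k. real_of_int (c i) *\<^sub>R b i) | c. True}"

lemma zl_zero: "0 \<in> zl k b"
  unfolding zl_def by (rule CollectI, rule exI[of _ "\<lambda>_. 0"]) simp

lemma zl_add: "x \<in> zl k b \<Longrightarrow> y \<in> zl k b \<Longrightarrow> x + y \<in> zl k b"
proof -
  assume "x \<in> zl k b" "y \<in> zl k b"
  then obtain c1 c2 where "x = (\<Sum>i<k. real_of_int (c1 i) *\<^sub>R b i)" "y = (\<Sum>i<k. real_of_int (c2 i) *\<^sub>R b i)"
    unfolding zl_def by auto
  then have "x + y = (\<Sum>i<k. real_of_int ((\<lambda>i. c1 i + c2 i) i) *\<^sub>R b i)"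
    by (simp add: sum.distrib scaleR_add_left)
  then show ?thesis unfolding zl_def mem_Collect_eq by (intro exI[of _ "\<lambda>i. c1 i + c2 i"]) simp
qed

lemma zl_scale: "x \<in> zl k b \<Longrightarrow> real_of_int m *\<^sub>R x \<in> zl k b"
proof -
  assume "x \<in> zl k b"
  then obtain c1 where "x = (\<Sum>i<k. real_of_int (c1 i) *\<^sub>R b i)"
    unfolding zl_def by auto
  then have "real_of_int m *\<^sub>R x = (\<Sum>i<k. real_of_int ((\<lambda>i. m * c1 i) i) *\<^sub>R b i)"
    by (simp add: scaleR_sum_right)
  then show ?thesis unfolding zl_def mem_Collect_eq by (intro exI[of _ "\<lambda>i. m * c1 i"]) simp
qed

lemma zl_neg: "x \<in> zl k b \<Longrightarrow> - x \<in> zl k b"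
  using zl_scale[of x k b "-1"] by simp

lemma zl_diff: "x \<in> zl k b \<Longrightarrow> y \<in> zl k b \<Longrightarrow> x - y \<in> zl k b"
  using zl_add zl_neg by (metis diff_conv_add_uminus)

lemma zl_sum: "finite A \<Longrightarrow> (\<forall>i\<in>A. x i \<in> zl k b) \<Longrightarrow> (\<Sum>i\<in>A. x i) \<in> zl k b"
  by (induction A rule: finite_induct) (auto simp: zl_zero zl_add)

lemma zl_comb: "(\<forall>i<(n::nat). w i \<in> zl k b) \<Longrightarrow> (\<Sum>i<n. real_of_int (c i) *\<^sub>R w i) \<in> zl k b"
  by (auto intro!: zl_sum zl_scale)

lemma intdep:
  "finite I \<Longrightarrow> card I = Suc k \<Longrightarrow>
   \<exists>c::'a \<Rightarrow> int. (\<exists>i\<in>I. c i \<noteq> 0) \<and> (\<forall>r<k. (\<Sum>i\<in>I. c i * u i r) = 0)"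
proof (induction k arbitrary: I u)
  case 0
  then obtain i where "I = {i}" by (auto simp: card_Suc_eq)
  then show ?case by (intro exI[of _ "\<lambda>_. 1"]) auto
next
  case (Suc k)
  show ?case
  proof (cases "\<forall>i\<in>I. u i k = 0")
    case True
    from Suc.prems obtain j where jI: "j \<in> I" by fastforce
    let ?I = "I - {j}"
    have "finite ?I" "card ?I = Suc k" using Suc.prems jI by auto
    from Suc.IH[OF this, of u] obtain c where c: "\<exists>i\<in>?I. c i \<noteq> 0" "\<forall>r<k. (\<Sum>i\<in>?I. c i * u i r) = 0"
      by blast
    define c' where "c' = (\<lambda>i. if i = j then 0 else c i)"
    have eq: "(\<Sum>i\<in>I. c' i * u i r) = (\<Sum>i\<in>?I. c i * u i r)" for r
      using Suc.prems jI by (simp add: sum.remove[of I j] c'_def)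
    show ?thesis
    proof (intro exI[of _ c'] conjI allI impI)
      show "\<exists>i\<in>I. c' i \<noteq> 0" using c(1) by (auto simp: c'_def)
      fix r assume "r < Suc k"
      then consider "r < k" | "r = k" by linarith
      then show "(\<Sum>i\<in>I. c' i * u i r) = 0"
      proof cases
        case 1 then show ?thesis using c(2) eq by simp
      next
        case 2 then show ?thesis using True by simp
      qed
    qed
  next
    case False
    then obtain j where jI: "j \<in> I" and uj: "u j k \<noteq> 0" by blast
    let ?I = "I - {j}"
    have "finite ?I" "card ?I = Suc k" using Suc.prems jI by auto
    define u' where "u' = (\<lambda>i r. u j k * u i r - u i k * u j r)"
    from Suc.IH[OF \<open>finite ?I\<close> \<open>card ?I = Suc k\<close>, of u'] obtain c where
      c: "\<exists>i\<in>?I. c i \<noteq> 0" "\<forall>r<k. (\<Sum>i\<in>?I. c i * u' i r) = 0"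
      by blast
    define c' where "c' = (\<lambda>i. if i = j then - (\<Sum>i\<in>?I. c i * u i k) else c i * u j k)"
    have eq: "(\<Sum>i\<in>I. c' i * u i r) = (\<Sum>i\<in>?I. c i * u' i r)" for r
    proof -
      have "(\<Sum>i\<in>I. c' i * u i r) = c' j * u j r + (\<Sum>i\<in>?I. c' i * u i r)"
        using Suc.prems jI by (simp add: sum.remove[of I j])
      also have "(\<Sum>i\<in>?I. c' i * u i r) = (\<Sum>i\<in>?I. c i * u j k * u i r)"
        by (rule sum.cong) (auto simp: c'_def)
      also have "c' j * u j r = - (\<Sum>i\<in>?I. c i * u i k * u j r)"
        by (simp add: c'_def sum_distrib_right)
      finally show ?thesis
        by (simp add: u'_def algebra_simps sum_subtractf sum_distrib_left)
    qed
    show ?thesis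
    proof (intro exI[of _ c'] conjI allI impI)
      show "\<exists>i\<in>I. c' i \<noteq> 0" using c(1) uj by (auto simp: c'_def)
      fix r assume "r < Suc k"
      then consider "r < k" | "r = k" by linarith
      then show "(\<Sum>i\<in>I. c' i * u i r) = 0"
      proof cases
        case 1 then show ?thesis using c(2) eq by simp
      next
        case 2 then show ?thesis unfolding eq by (simp add: u'_def)
      qed
    qed
  qed
qed

lemma zspan_single: "u \<in> S \<Longrightarrow> u \<in> zspan S"
  unfolding zspan_def
  by (rule CollectI, rule exI[of _ "{u}"], rule exI[of _ "\<lambda>_. 1"]) simp

lemma zindep_mono: "zindep n w \<Longrightarrow> m \<le> n \<Longrightarrow> zindep m w"
  unfolding zindep_def
proof (intro allI impI)
  fix c :: "nat \<Rightarrow> int" and i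
  assume h: "\<forall>c::nat \<Rightarrow> int. (\<Sum>i<n. real_of_int (c i) *\<^sub>R w i) = 0 \<longrightarrow> (\<forall>i<n. c i = 0)"
    and mn: "m \<le> n" and c0: "(\<Sum>i<m. real_of_int (c i) *\<^sub>R w i) = 0" and im: "i < m"
  define c' where "c' = (\<lambda>i. if i < m then c i else 0)"
  have "(\<Sum>i<n. real_of_int (c' i) *\<^sub>R w i) = (\<Sum>i<n. if i < m then real_of_int (c i) *\<^sub>R w i else 0)"
    by (rule sum.cong) (auto simp: c'_def)
  also have "\<dots> = (\<Sum>i\<in>{i\<in>{..<n}. i < m}. real_of_int (c i) *\<^sub>R w i)"
    by (rule sum.inter_filter[symmetric]) simp
  also have "{i\<in>{..<n}. i < m} = {..<m}" using mn by auto
  finally have "(\<Sum>i<n. real_of_int (c' i) *\<^sub>R w i) = 0" using c0 by simp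
  then have "c' i = 0" using h im mn by auto
  then show "c i = 0" using im by (simp add: c'_def)
qed

lemma sum_if_less: "(m::nat) \<le> k \<Longrightarrow> (\<Sum>i<k. if i < m then f i else 0) = (\<Sum>i<m. f i)"
proof -
  assume "m \<le> k"
  have "(\<Sum>i<k. if i < m then f i else 0) = (\<Sum>i\<in>{i\<in>{..<k}. i < m}. f i)"
    by (rule sum.inter_filter[symmetric]) simp
  also have "{i\<in>{..<k}. i < m} = {..<m}" using \<open>m \<le> k\<close> by auto
  finally show ?thesis .
qed

locale smin =
  fixes L :: "'v::real_vector set" and Q :: "'v \<Rightarrow> real" and k :: nat
    and v :: "nat \<Rightarrow> 'v" and b :: "nat \<Rightarrow> 'v" and \<beta> :: "'v \<Rightarrow> 'v \<Rightarrow> real"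
  assumes Ldef: "L = zl k b" and bil: "bilinear \<beta>" and Qdef: "\<And>x. Q x = \<beta> x x"
    and pos: "\<And>x. x \<in> L \<Longrightarrow> x \<noteq> 0 \<Longrightarrow> Q x > 0"
    and vL: "\<And>i. i < k \<Longrightarrow> v i \<in> L" and vind: "zindep k v"
    and smin: "\<And>i. i < k \<Longrightarrow> is_succ_min L Q (Suc i) (Q (v i))"
begin

lemma v_nz: "i < k \<Longrightarrow> v i \<noteq> 0"
proof
  assume ik: "i < k" and v0: "v i = 0"
  define c :: "nat \<Rightarrow> int" where "c = (\<lambda>l. if l = i then 1 else 0)"
  have "(\<Sum>l<k. real_of_int (c l) *\<^sub>R v l) = (\<Sum>l<k. if l = i then v l else 0)"
    by (rule sum.cong) (auto simp: c_def)
  also have "\<dots> = 0" using ik v0 by (simp add: sum.delta)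
  finally have "(\<Sum>l<k. real_of_int (c l) *\<^sub>R v l) = 0" .
  then have "c i = 0" using vind ik unfolding zindep_def by blast
  then show False by (simp add: c_def)
qed

lemma Qv_pos: "i < k \<Longrightarrow> Q (v i) > 0"
  using pos vL v_nz by blast

lemma Qmono: "i \<le> j \<Longrightarrow> j < k \<Longrightarrow> Q (v i) \<le> Q (v j)"
proof -
  assume ij: "i \<le> j" and jk: "j < k"
  have "zrank_ge {x\<in>L. Q x \<le> Q (v j)} (Suc j)" using smin[OF jk] by (simp add: is_succ_min_def)
  then have "zrank_ge {x\<in>L. Q x \<le> Q (v j)} (Suc i)"
    unfolding zrank_ge_def using zindep_mono ij by (meson Suc_le_mono less_le_trans not_le)
  then show ?thesis using smin[of i] ij jk by (simp add: is_succ_min_def)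
qed

lemma key:
  assumes y: "y \<in> L" and d: "d \<noteq> 0"
    and dy: "real_of_int d *\<^sub>R y = (\<Sum>i<k. real_of_int (e i) *\<^sub>R v i)"
    and jk: "j < k" and ej: "e j \<noteq> 0" and z: "\<And>i. j < i \<Longrightarrow> i < k \<Longrightarrow> e i = 0"
  shows "Q (v j) \<le> Q y"
proof (rule ccontr)
  assume "\<not> ?thesis"
  then have lt: "Q y < Q (v j)" by simp
  define m where "m = (LEAST m. Q y < Q (v m))"
  have m1: "Q y < Q (v m)" unfolding m_def by (rule LeastI[of "\<lambda>m. Q y < Q (v m)" j]) (rule lt)
  have mj: "m \<le> j" unfolding m_def by (rule Least_le) (rule lt)
  have m2: "Q (v i) \<le> Q y" if "i < m" for i
    using not_less_Least[of i "\<lambda>m. Q y < Q (v m)"] that unfolding m_def by simp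
  define w where "w = (\<lambda>i. if i < m then v i else y)"
  let ?S = "{x\<in>L. Q x \<le> Q y}"
  have "zrank_ge ?S (Suc m)"
    unfolding zrank_ge_def
  proof (intro exI[of _ w] conjI allI impI)
    fix i assume "i < Suc m"
    have "w i \<in> ?S"
    proof (cases "i < m")
      case True
      then show ?thesis using vL m2 mj jk by (simp add: w_def)
    next
      case False
      then show ?thesis using y by (simp add: w_def)
    qed
    then show "w i \<in> zspan ?S" by (rule zspan_single)
  next
    show "zindep (Suc m) w" unfolding zindep_def
    proof (intro allI impI)
      fix c :: "nat \<Rightarrow> int" and i
      assume c0: "(\<Sum>i<Suc m. real_of_int (c i) *\<^sub>R w i) = 0" and im: "i < Suc m"
      have "(\<Sum>i<Suc m. real_of_int (c i) *\<^sub>R w i)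
          = (\<Sum>i<m. real_of_int (c i) *\<^sub>R v i) + real_of_int (c m) *\<^sub>R y"
        by (simp add: w_def)
      with c0 have c1: "(\<Sum>i<m. real_of_int (c i) *\<^sub>R v i) + real_of_int (c m) *\<^sub>R y = 0" by simp
      define g where "g = (\<lambda>i. (if i < m then d * c i else 0) + c m * e i)"
      have "(\<Sum>i<k. real_of_int (g i) *\<^sub>R v i)
          = (\<Sum>i<k. (if i < m then real_of_int (d * c i) *\<^sub>R v i else 0))
            + (\<Sum>i<k. real_of_int (c m) *\<^sub>R (real_of_int (e i) *\<^sub>R v i))"
        by (simp add: g_def sum.distrib scaleR_add_left if_distrib[of "\<lambda>t. real_of_int t *\<^sub>R _"] cong: if_cong)
      also have "(\<Sum>i<k. (if i < m then real_of_int (d * c i) *\<^sub>R v i else 0))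
          = (\<Sum>i<m. real_of_int (d * c i) *\<^sub>R v i)"
        using mj jk by (intro sum_if_less) simp
      also have "\<dots> = real_of_int d *\<^sub>R (\<Sum>i<m. real_of_int (c i) *\<^sub>R v i)"
        by (simp add: scaleR_sum_right)
      also have "(\<Sum>i<k. real_of_int (c m) *\<^sub>R (real_of_int (e i) *\<^sub>R v i))
          = real_of_int (c m) *\<^sub>R (real_of_int d *\<^sub>R y)"
        by (simp add: dy scaleR_sum_right)
      also have "real_of_int d *\<^sub>R (\<Sum>i<m. real_of_int (c i) *\<^sub>R v i) + real_of_int (c m) *\<^sub>R (real_of_int d *\<^sub>R y)
          = real_of_int d *\<^sub>R ((\<Sum>i<m. real_of_int (c i) *\<^sub>R v i) + real_of_int (c m) *\<^sub>R y)"
        by (simp add: scaleR_add_right)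
      also have "\<dots> = 0" using c1 by simp
      finally have g0: "\<forall>i<k. g i = 0" using vind unfolding zindep_def by blast
      have "g j = c m * e j" using mj by (simp add: g_def)
      then have cm: "c m = 0" using g0 jk ej by simp
      show "c i = 0"
      proof (cases "i < m")
        case True
        then have "g i = d * c i" using cm by (simp add: g_def)
        moreover have "i < k" using True mj jk by simp
        ultimately have "d * c i = 0" using g0 by simp
        then show ?thesis using d by simp
      next
        case False
        then have "i = m" using im by simp
        then show ?thesis using cm by simp
      qed
    qed
  qed
  then have "Q (v m) \<le> Q y" using smin[of m] mj jk by (simp add: is_succ_min_def)
  with m1 show False by simp
qed

lemma conv:
  "(1 - a) * Q (u + a *\<^sub>R w) + a * Q (u + (a - 1) *\<^sub>R w) = Q u + a * (1 - a) * Q w"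
  apply (simp only: Qdef bilinear_ladd[OF bil] bilinear_radd[OF bil] bilinear_lmul[OF bil]
      bilinear_rmul[OF bil] real_scaleR_def)
  apply (simp add: algebra_simps power2_eq_square)
  done

lemma Q0: "Q 0 = 0"
  unfolding Qdef using bilinear_lzero[OF bil] by simp

lemma dr:
  assumes f: "\<And>i. 0 \<le> f i \<and> f i \<le> 1"
  shows "\<exists>s. (\<forall>i. f i = 0 \<longrightarrow> \<not> s i) \<and>
    Q (\<Sum>i<n. (f i - (if s i then 1 else 0)) *\<^sub>R v i) \<le> (\<Sum>i<n. f i * (1 - f i) * Q (v i))"
proof (induction n)
  case 0
  show ?case by (intro exI[of _ "\<lambda>_. False"]) (simp add: Q0)
next
  case (Suc n)
  then obtain s where s: "\<forall>i. f i = 0 \<longrightarrow> \<not> s i"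
    "Q (\<Sum>i<n. (f i - (if s i then 1 else 0)) *\<^sub>R v i) \<le> (\<Sum>i<n. f i * (1 - f i) * Q (v i))"
    by blast
  define u where "u = (\<Sum>i<n. (f i - (if s i then 1 else 0)) *\<^sub>R v i)"
  define a where "a = f n"
  define t where "t = (a \<noteq> 0 \<and> Q (u + (a - 1) *\<^sub>R v n) < Q (u + a *\<^sub>R v n))"
  define s' where "s' = s(n := t)"
  have a01: "0 \<le> a" "a \<le> 1" using f a_def by auto
  have eqs: "(\<Sum>i<n. (f i - (if s' i then 1 else 0)) *\<^sub>R v i) = u"
    unfolding u_def by (rule sum.cong) (auto simp: s'_def)
  have cv: "(1 - a) * Q (u + a *\<^sub>R v n) + a * Q (u + (a - 1) *\<^sub>R v n) = Q u + a * (1 - a) * Q (v n)"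
    by (rule conv)
  have step: "Q (u + (a - (if t then 1 else 0)) *\<^sub>R v n) \<le> Q u + a * (1 - a) * Q (v n)"
  proof (cases t)
    case True
    then have lt: "Q (u + (a - 1) *\<^sub>R v n) < Q (u + a *\<^sub>R v n)" by (simp add: t_def)
    have "(1 - a) * Q (u + (a - 1) *\<^sub>R v n) \<le> (1 - a) * Q (u + a *\<^sub>R v n)"
      using lt a01 by (intro mult_left_mono) auto
    then show ?thesis using True cv by (simp add: algebra_simps)
  next
    case False
    then consider "a = 0" | "Q (u + a *\<^sub>R v n) \<le> Q (u + (a - 1) *\<^sub>R v n)" by (auto simp: t_def)
    then show ?thesis
    proof cases
      case 1 then show ?thesis using False by simp
    next
      case 2
      have "a * Q (u + a *\<^sub>R v n) \<le> a * Q (u + (a - 1) *\<^sub>R v n)"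
        using 2 a01 by (intro mult_left_mono) auto
      then show ?thesis using False cv by (simp add: algebra_simps)
    qed
  qed
  show ?case
  proof (intro exI[of _ s'] conjI)
    show "\<forall>i. f i = 0 \<longrightarrow> \<not> s' i" using s(1) by (auto simp: s'_def t_def a_def)
    have "(\<Sum>i<Suc n. (f i - (if s' i then 1 else 0)) *\<^sub>R v i) = u + (a - (if t then 1 else 0)) *\<^sub>R v n"
      using eqs by (simp add: s'_def a_def)
    then show "Q (\<Sum>i<Suc n. (f i - (if s' i then 1 else 0)) *\<^sub>R v i) \<le> (\<Sum>i<Suc n. f i * (1 - f i) * Q (v i))"
      using step s(2) by (simp add: u_def a_def)
  qed
qed

end

lemma all_less4: "(\<forall>i<(4::nat). P i) \<longleftrightarrow> P 0 \<and> P 1 \<and> P 2 \<and> P 3"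
  by (auto simp: less_Suc_eq numeral_eq_Suc)

lemma sum4: "(\<Sum>i<(4::nat). f i) = f 0 + f 1 + f 2 + f 3"
  by (simp add: numeral_eq_Suc)

context smin begin

lemma Qsum: "Q (\<Sum>i<n. c i *\<^sub>R v i) = (\<Sum>i<n. \<Sum>l<n. c i * c l * \<beta> (v i) (v l))"
  unfolding Qdef
  by (simp add: bilinear_sum[OF bil] sum.cartesian_product[symmetric]
      bilinear_lmul[OF bil] bilinear_rmul[OF bil] algebra_simps)

lemma main:
  assumes k4: "k \<le> 4" and xL: "x \<in> L"
  shows "(\<exists>c. x = (\<Sum>i<k. real_of_int (c i) *\<^sub>R v i)) \<or>
    (k = 4 \<and> (\<forall>i<4. Q (v i) = Q (v 3)) \<and>
     (\<forall>i<4. \<forall>l<4. i \<noteq> l \<longrightarrow> \<beta> (v i) (v l) + \<beta> (v l) (v i) = 0))"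
proof (cases "\<exists>c. x = (\<Sum>i<k. real_of_int (c i) *\<^sub>R v i)")
  case True
  then show ?thesis by (rule disjI1)
next
  case False
  then have nx: "\<nexists>c. x = (\<Sum>i<k. real_of_int (c i) *\<^sub>R v i)" by simp
  have "\<forall>i. \<exists>c. i < k \<longrightarrow> v i = (\<Sum>r<k. real_of_int (c r) *\<^sub>R b r)"
    using vL unfolding Ldef zl_def by blast
  then obtain cb where cb: "\<And>i. i < k \<Longrightarrow> v i = (\<Sum>r<k. real_of_int (cb i r) *\<^sub>R b r)"
    by metis
  obtain cx where cx: "x = (\<Sum>r<k. real_of_int (cx r) *\<^sub>R b r)"
    using xL unfolding Ldef zl_def by blast
  define u where "u = (\<lambda>i r. if i < k then cb i r else cx r)"
  define vv where "vv = (\<lambda>i. if i < k then v i else x)"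
  have vvu: "vv i = (\<Sum>r<k. real_of_int (u i r) *\<^sub>R b r)" for i
    by (simp add: vv_def u_def cb cx)
  obtain c0 where c0: "\<exists>i\<in>{..<Suc k}. c0 i \<noteq> 0" "\<forall>r<k. (\<Sum>i\<in>{..<Suc k}. c0 i * u i r) = 0"
    using intdep[of "{..<Suc k}" k u] by auto
  have rel0: "(\<Sum>i<Suc k. real_of_int (c0 i) *\<^sub>R vv i) = 0"
  proof -
    have "(\<Sum>i<Suc k. real_of_int (c0 i) *\<^sub>R vv i)
        = (\<Sum>i<Suc k. \<Sum>r<k. real_of_int (c0 i * u i r) *\<^sub>R b r)"
      by (simp add: vvu scaleR_sum_right)
    also have "\<dots> = (\<Sum>r<k. \<Sum>i<Suc k. real_of_int (c0 i * u i r) *\<^sub>R b r)"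
      by (rule sum.swap)
    also have "\<dots> = (\<Sum>r<k. real_of_int (\<Sum>i<Suc k. c0 i * u i r) *\<^sub>R b r)"
      by (simp del: sum.lessThan_Suc add: scaleR_sum_left)
    also have "\<dots> = 0" using c0(2) by simp
    finally show ?thesis .
  qed
  have rel1: "real_of_int (c0 k) *\<^sub>R x + (\<Sum>i<k. real_of_int (c0 i) *\<^sub>R v i) = 0"
    using rel0 by (simp add: vv_def add.commute)
  have ck: "c0 k \<noteq> 0"
  proof
    assume "c0 k = 0"
    then have "(\<Sum>i<k. real_of_int (c0 i) *\<^sub>R v i) = 0" using rel1 by simp
    then have "\<forall>i<k. c0 i = 0" using vind unfolding zindep_def by blast
    with \<open>c0 k = 0\<close> c0(1) show False using less_Suc_eq by auto
  qed
  define d where "d = \<bar>c0 k\<bar>"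
  define n where "n = (\<lambda>i. - sgn (c0 k) * c0 i)"
  have dpos: "d > 0" using ck by (simp add: d_def)
  have dx: "real_of_int d *\<^sub>R x = (\<Sum>i<k. real_of_int (n i) *\<^sub>R v i)"
  proof -
    have "real_of_int (sgn (c0 k)) *\<^sub>R (real_of_int (c0 k) *\<^sub>R x + (\<Sum>i<k. real_of_int (c0 i) *\<^sub>R v i)) = 0"
      using rel1 by simp
    then have "real_of_int (sgn (c0 k) * c0 k) *\<^sub>R x + (\<Sum>i<k. real_of_int (sgn (c0 k) * c0 i) *\<^sub>R v i) = 0"
      by (simp add: scaleR_add_right scaleR_sum_right)
    moreover have "sgn (c0 k) * c0 k = d" by (simp add: d_def abs_sgn)
    ultimately have "real_of_int d *\<^sub>R x = - (\<Sum>i<k. real_of_int (sgn (c0 k) * c0 i) *\<^sub>R v i)"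
      by (simp add: eq_neg_iff_add_eq_0)
    also have "\<dots> = (\<Sum>i<k. real_of_int (n i) *\<^sub>R v i)"
      by (simp add: n_def sum_negf)
    finally show ?thesis .
  qed
  define qq where "qq = (\<lambda>i. n i div d)"
  define r where "r = (\<lambda>i. n i mod d)"
  have r_bd: "0 \<le> r i" "r i < d" for i using dpos by (auto simp: r_def)
  define x' where "x' = x - (\<Sum>i<k. real_of_int (qq i) *\<^sub>R v i)"
  have x'L: "x' \<in> L" unfolding x'_def using xL vL unfolding Ldef by (intro zl_diff zl_comb) auto
  have dx': "real_of_int d *\<^sub>R x' = (\<Sum>i<k. real_of_int (r i) *\<^sub>R v i)"
  proof -
    have "real_of_int d *\<^sub>R x' = (\<Sum>i<k. real_of_int (n i) *\<^sub>R v i) - (\<Sum>i<k. real_of_int (d * qq i) *\<^sub>R v i)"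
      by (simp add: x'_def dx scaleR_diff_right scaleR_sum_right)
    also have "\<dots> = (\<Sum>i<k. real_of_int (n i - d * qq i) *\<^sub>R v i)"
      by (simp add: sum_subtractf scaleR_diff_left)
    also have "\<dots> = (\<Sum>i<k. real_of_int (r i) *\<^sub>R v i)"
    proof (intro sum.cong refl)
      fix i
      have "n i - d * qq i = r i" using div_mult_mod_eq[of "n i" d] by (simp add: r_def qq_def algebra_simps)
      then show "real_of_int (n i - d * qq i) *\<^sub>R v i = real_of_int (r i) *\<^sub>R v i" by simp
    qed
    finally show ?thesis .
  qed
  have ex_r: "\<exists>i<k. r i \<noteq> 0"
  proof (rule ccontr)
    assume "\<not> ?thesis"
    then have "real_of_int d *\<^sub>R x' = 0" using dx' by simp
    then have "x' = 0" using dpos by simp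
    then have "x = (\<Sum>i<k. real_of_int (qq i) *\<^sub>R v i)" by (simp add: x'_def)
    with nx show False by blast
  qed
  define J where "J = {i. i < k \<and> r i \<noteq> 0}"
  have Jfin: "finite J" "J \<noteq> {}" using ex_r by (auto simp: J_def)
  define j where "j = Max J"
  have jJ: "j \<in> J" using Jfin unfolding j_def by (rule Max_in)
  then have jk: "j < k" and rj: "r j \<noteq> 0" by (auto simp: J_def)
  have rz: "r i = 0" if "j < i" "i < k" for i
  proof (rule ccontr)
    assume "r i \<noteq> 0"
    then have "i \<in> J" using that by (simp add: J_def)
    then have "i \<le> j" using Jfin unfolding j_def by simp
    with that show False by simp
  qed
  define f where "f = (\<lambda>i. real_of_int (r i) / real_of_int d)"
  have f01: "0 \<le> f i \<and> f i \<le> 1" for i using r_bd[of i] dpos by (auto simp: f_def)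
  have f0: "f i = 0 \<longleftrightarrow> r i = 0" for i using dpos by (simp add: f_def)
  obtain s where s: "\<forall>i. f i = 0 \<longrightarrow> \<not> s i"
    "Q (\<Sum>i<k. (f i - (if s i then 1 else 0)) *\<^sub>R v i) \<le> (\<Sum>i<k. f i * (1 - f i) * Q (v i))"
    using dr[of f k] f01 by blast
  define y where "y = (\<Sum>i<k. (f i - (if s i then 1 else 0)) *\<^sub>R v i)"
  define e where "e = (\<lambda>i. r i - (if s i then d else 0))"
  have dy: "real_of_int d *\<^sub>R y = (\<Sum>i<k. real_of_int (e i) *\<^sub>R v i)"
    unfolding y_def scaleR_sum_right
  proof (rule sum.cong)
    fix i
    have "real_of_int d * (f i - (if s i then 1 else 0)) = real_of_int (e i)"
      using dpos by (simp add: e_def f_def field_simps)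
    then show "real_of_int d *\<^sub>R ((f i - (if s i then 1 else 0)) *\<^sub>R v i) = real_of_int (e i) *\<^sub>R v i"
      by (simp add: scaleR_scaleR)
  qed simp
  have yL: "y \<in> L"
  proof -
    define z where "z = x' - (\<Sum>i<k. real_of_int (if s i then 1 else 0) *\<^sub>R v i)"
    have zL: "z \<in> L" unfolding z_def using x'L vL unfolding Ldef by (intro zl_diff zl_comb) auto
    have "real_of_int d *\<^sub>R z = (\<Sum>i<k. real_of_int (r i) *\<^sub>R v i) - (\<Sum>i<k. real_of_int (if s i then d else 0) *\<^sub>R v i)"
    proof -
      have "real_of_int d *\<^sub>R (\<Sum>i<k. real_of_int (if s i then 1 else 0) *\<^sub>R v i) = (\<Sum>i<k. real_of_int (if s i then d else 0) *\<^sub>R v i)"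
        unfolding scaleR_sum_right by (rule sum.cong) auto
      then show ?thesis by (simp add: z_def scaleR_diff_right dx')
    qed
    also have "\<dots> = real_of_int d *\<^sub>R y"
      by (simp add: dy e_def sum_subtractf scaleR_diff_left)
    finally have "z = y" using dpos by simp
    with zL show ?thesis by simp
  qed
  have ej: "e j \<noteq> 0" using rj r_bd[of j] by (auto simp: e_def)
  have ez: "e i = 0" if "j < i" "i < k" for i
    using rz[OF that] s(1) f0 by (auto simp: e_def)
  have Qj: "Q (v j) \<le> Q y" by (rule key[OF yL _ dy jk ej ez]) (use dpos in auto)
  define t where "t = (\<lambda>i. f i * (1 - f i) * Q (v i))"
  have t_le: "t i \<le> Q (v j) / 4" if "i \<le> j" for i
  proof -
    have "f i * (1 - f i) \<le> 1/4" using sum_squares_ge_zero[of "f i - 1/2" 0]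
      by (simp add: algebra_simps power2_eq_square)
    moreover have "0 \<le> Q (v i)" "Q (v i) \<le> Q (v j)" using Qv_pos[of i] Qmono[OF that jk] that jk by auto
    ultimately have "f i * (1 - f i) * Q (v i) \<le> 1/4 * Q (v i)" by (intro mult_right_mono) auto
    then show ?thesis using \<open>Q (v i) \<le> Q (v j)\<close> by (simp add: t_def)
  qed
  have t_z: "t i = 0" if "j < i" "i < k" for i using rz[OF that] f0 by (simp add: t_def)
  have "(\<Sum>i<k. t i) \<le> (\<Sum>i<k. if i \<le> j then Q (v j) / 4 else 0)"
    by (rule sum_mono) (use t_le t_z in auto)
  also have "\<dots> = (\<Sum>i\<in>{i\<in>{..<k}. i \<le> j}. Q (v j) / 4)"
    by (rule sum.inter_filter[symmetric]) simp
  also have "{i\<in>{..<k}. i \<le> j} = {..j}" using jk by auto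
  finally have tsum: "(\<Sum>i<k. t i) \<le> real (Suc j) * (Q (v j) / 4)" by simp
  have Qy: "Q (v j) \<le> (\<Sum>i<k. t i)" using Qj s(2) by (simp add: y_def t_def)
  have "Q (v j) > 0" using Qv_pos jk by simp
  have "real (Suc j) \<ge> 4"
  proof (rule ccontr)
    assume "\<not> 4 \<le> real (Suc j)"
    then have "real (Suc j) * (Q (v j) / 4) < 4 * (Q (v j) / 4)"
      using \<open>Q (v j) > 0\<close> by (intro mult_strict_right_mono) auto
    then show False using Qy tsum by simp
  qed
  then have j3: "j = 3" and k4': "k = 4" using jk k4 by auto
  have tsum4: "t 0 + t 1 + t 2 + t 3 \<ge> Q (v 3)" using Qy k4' j3 by (simp add: sum4)
  have tle: "t i \<le> Q (v 3) / 4" if "i < 4" for i using t_le[of i] that j3 by simp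
  have teq: "t i = Q (v 3) / 4" if "i < 4" for i
  proof -
    have "t 0 \<le> Q (v 3) / 4" "t 1 \<le> Q (v 3) / 4" "t 2 \<le> Q (v 3) / 4" "t 3 \<le> Q (v 3) / 4"
      using tle by auto
    with tsum4 that show ?thesis by (auto simp: less_Suc_eq numeral_eq_Suc)
  qed
  have feq: "f i = 1/2 \<and> Q (v i) = Q (v 3)" if "i < 4" for i
  proof -
    have ff: "f i * (1 - f i) \<le> 1/4" using sum_squares_ge_zero[of "f i - 1/2" 0]
      by (simp add: algebra_simps power2_eq_square)
    have q0: "0 < Q (v i)" "Q (v i) \<le> Q (v 3)" using Qv_pos[of i] Qmono[of i 3] that k4' by auto
    have "f i * (1 - f i) * Q (v i) \<le> 1/4 * Q (v i)" using ff q0 by (intro mult_right_mono) auto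
    with teq[OF that] q0 have qe: "Q (v i) = Q (v 3)" by (simp add: t_def)
    with teq[OF that] have "(f i * (1 - f i)) * Q (v 3) = (1/4) * Q (v 3)" by (simp add: t_def)
    then have "f i * (1 - f i) = 1/4" using q0 by (subst (asm) mult_right_cancel) auto
    then have "(f i - 1/2)^2 = 0" by (simp add: algebra_simps power2_eq_square)
    then show ?thesis using qe by simp
  qed
  have x'h: "x' = (\<Sum>i<4. (1/2) *\<^sub>R v i)"
  proof -
    have "real_of_int d *\<^sub>R x' = (\<Sum>i<4. real_of_int (r i) *\<^sub>R v i)" using dx' k4' by simp
    also have "\<dots> = (\<Sum>i<4. real_of_int d *\<^sub>R ((1/2) *\<^sub>R v i))"
    proof (rule sum.cong)
      fix i assume "i \<in> {..<(4::nat)}"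
      then have "f i = 1/2" using feq by simp
      then have "real_of_int (r i) = real_of_int d / 2" using dpos by (simp add: f_def field_simps)
      then show "real_of_int (r i) *\<^sub>R v i = real_of_int d *\<^sub>R ((1/2) *\<^sub>R v i)" by simp
    qed simp
    also have "\<dots> = real_of_int d *\<^sub>R (\<Sum>i<4. (1/2) *\<^sub>R v i)" by (simp only: scaleR_sum_right)
    finally have "real_of_int d *\<^sub>R x' = real_of_int d *\<^sub>R (\<Sum>i<4. (1/2) *\<^sub>R v i)" .
    then show ?thesis using dpos scaleR_cancel_left by (metis of_int_0_less_iff less_irrefl)
  qed
  have signs: "Q (v 3) \<le> Q (\<Sum>i<4. ((1 - 2 * real_of_int (g i)) / 2) *\<^sub>R v i)"
    if g01: "\<And>i. g i = 0 \<or> g i = 1" and g3: "g 3 = 0" for g :: "nat \<Rightarrow> int"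
  proof -
    define yy where "yy = x' - (\<Sum>i<4. real_of_int (g i) *\<^sub>R v i)"
    have yyL: "yy \<in> L" unfolding yy_def using x'L vL k4' unfolding Ldef by (intro zl_diff zl_comb) auto
    have yye: "yy = (\<Sum>i<4. ((1 - 2 * real_of_int (g i)) / 2) *\<^sub>R v i)"
      unfolding yy_def x'h by (simp add: sum_subtractf[symmetric] algebra_simps diff_divide_distrib)
    have "real_of_int 2 *\<^sub>R yy = (\<Sum>i<k. real_of_int (1 - 2 * g i) *\<^sub>R v i)"
      unfolding yye k4' scaleR_sum_right by (rule sum.cong) auto
    from key[OF yyL _ this] have "Q (v 3) \<le> Q yy" using g3 k4' by simp
    then show ?thesis using yye by simp
  qed
  define G where "G = (\<lambda>i l. \<beta> (v i) (v l))"
  have GD: "G i i = Q (v 3)" if "i < 4" for i using feq[OF that] by (simp add: G_def Qdef)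
  have sg: "Q (v 3) \<le> (\<Sum>i<4. \<Sum>l<4. ((1 - 2 * real_of_int (g i)) / 2) * ((1 - 2 * real_of_int (g l)) / 2) * G i l)"
    if "\<And>i. g i = 0 \<or> g i = 1" "g 3 = 0" for g :: "nat \<Rightarrow> int"
    using signs[of g, OF that] unfolding Qsum G_def .
  have sgb: "Q (v 3) \<le> (\<Sum>i<4. \<Sum>l<4. ((1 - 2 * real_of_int (g i)) / 2) * ((1 - 2 * real_of_int (g l)) / 2) * G i l)"
    if "g = (\<lambda>i. if i = 0 then a0 else if i = 1 then a1 else if i = 2 then a2 else 0)"
       "a0 = 0 \<or> a0 = 1" "a1 = 0 \<or> a1 = 1" "a2 = 0 \<or> a2 = 1" for g a0 a1 a2
    by (rule sg) (use that in auto)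
  note GDs = GD[of 0] GD[of 1] GD[of 2] GD[of 3]
  have E: "Q (v 3) \<le> (\<Sum>i<4. \<Sum>l<4. ((1 - 2 * real_of_int ((\<lambda>i. if i = 0 then a0 else if i = 1 then a1 else if i = 2 then a2 else 0) i)) / 2) * ((1 - 2 * real_of_int ((\<lambda>i. if i = 0 then a0 else if i = 1 then a1 else if i = 2 then a2 else 0) l)) / 2) * G i l)"
    if "a0 = 0 \<or> a0 = 1" "a1 = 0 \<or> a1 = 1" "a2 = 0 \<or> a2 = 1" for a0 a1 a2 :: int
    by (rule sgb[OF refl that])
  note Es = E[of 0 0 0] E[of 0 0 1] E[of 0 1 0] E[of 0 1 1] E[of 1 0 0] E[of 1 0 1] E[of 1 1 0] E[of 1 1 1]
  have H: "G 0 1 + G 1 0 = 0 \<and> G 0 2 + G 2 0 = 0 \<and> G 0 3 + G 3 0 = 0 \<and>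
      G 1 2 + G 2 1 = 0 \<and> G 1 3 + G 3 1 = 0 \<and> G 2 3 + G 3 2 = 0"
    using Es by (simp add: sum4 GDs GD[of "Suc 0"])
  have "k = 4 \<and> (\<forall>i<4. Q (v i) = Q (v 3)) \<and> (\<forall>i<4. \<forall>l<4. i \<noteq> l \<longrightarrow> \<beta> (v i) (v l) + \<beta> (v l) (v i) = 0)"
  proof (intro conjI)
    show "k = 4" by (rule k4')
    show "\<forall>i<4. Q (v i) = Q (v 3)" unfolding all_less4 using feq[of 0] feq[of 1] feq[of 2] by simp
    show "\<forall>i<4. \<forall>l<4. i \<noteq> l \<longrightarrow> \<beta> (v i) (v l) + \<beta> (v l) (v i) = 0"
      using H unfolding all_less4 G_def by (simp add: add.commute)
  qed
  then show ?thesis by (rule disjI2)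
qed

end

lemma sqmod: "(even (y::int) \<and> (y^2 mod 8 = 0 \<or> y^2 mod 8 = 4)) \<or> (odd y \<and> y^2 mod 8 = 1)"
proof -
  have e: "y^2 mod 8 = ((y mod 8)^2) mod 8" by (simp add: power_mod)
  have ev: "even y \<longleftrightarrow> even (y mod 8)"
    by (metis dvd_mod_iff even_numeral)
  have "y mod 8 = 0 \<or> y mod 8 = 1 \<or> y mod 8 = 2 \<or> y mod 8 = 3 \<or> y mod 8 = 4 \<or> y mod 8 = 5 \<or> y mod 8 = 6 \<or> y mod 8 = 7"
    by linarith
  then show ?thesis unfolding e ev by (elim disjE) (simp_all add: power2_eq_square)
qed

lemma m8: "(8::int) * u = c \<Longrightarrow> 0 \<le> c \<Longrightarrow> c \<le> 16 \<Longrightarrow> c = 0 \<or> c = 8 \<or> c = 16"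
  by presburger
lemma aux8:
  fixes s0 s1 s2 s3 u :: int
  assumes "(e0 \<and> (s0 = 0 \<or> s0 = 4)) \<or> (\<not>e0 \<and> s0 = 1)"
    "(e1 \<and> (s1 = 0 \<or> s1 = 4)) \<or> (\<not>e1 \<and> s1 = 1)"
    "(e2 \<and> (s2 = 0 \<or> s2 = 4)) \<or> (\<not>e2 \<and> s2 = 1)"
    "(e3 \<and> (s3 = 0 \<or> s3 = 4)) \<or> (\<not>e3 \<and> s3 = 1)"
    "s0 + s1 + s2 + s3 = 8 * u"
  shows "e0 \<and> e1 \<and> e2 \<and> e3"
proof -
  have "0 \<le> s0 + s1 + s2 + s3" "s0 + s1 + s2 + s3 \<le> 16" using assms(1-4) by auto
  then have "s0 + s1 + s2 + s3 = 0 \<or> s0 + s1 + s2 + s3 = 8 \<or> s0 + s1 + s2 + s3 = 16"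
    using m8[of u "s0 + s1 + s2 + s3"] assms(5) by simp
  then show ?thesis using assms(1-4) by auto
qed

lemma lin8:
  fixes a0 a1 a2 a3 q0 q1 q2 q3 s0 s1 s2 s3 t :: int
  shows "a0 = 8*q0 + s0 \<Longrightarrow> a1 = 8*q1 + s1 \<Longrightarrow> a2 = 8*q2 + s2 \<Longrightarrow> a3 = 8*q3 + s3 \<Longrightarrow>
    a0 + a1 + a2 + a3 = 8*t \<Longrightarrow> s0 + s1 + s2 + s3 = 8*(t - q0 - q1 - q2 - q3)"
  unfolding right_diff_distrib by linarith

lemma sum4sq8:
  fixes y0 y1 y2 y3 :: int
  assumes "8 dvd (y0^2 + y1^2 + y2^2 + y3^2)"
  shows "even y0 \<and> even y1 \<and> even y2 \<and> even y3"
proof -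
  obtain t where t: "y0^2 + y1^2 + y2^2 + y3^2 = 8 * t" using assms by (elim dvdE)
  have d: "y^2 = 8 * (y^2 div 8) + y^2 mod 8" for y :: int by simp
  have "y0^2 mod 8 + y1^2 mod 8 + y2^2 mod 8 + y3^2 mod 8
      = 8 * (t - y0^2 div 8 - y1^2 div 8 - y2^2 div 8 - y3^2 div 8)"
    by (rule lin8[OF d[of y0] d[of y1] d[of y2] d[of y3] t])
  then show ?thesis
    by (rule aux8[OF sqmod[of y0] sqmod[of y1] sqmod[of y2] sqmod[of y3]])
qed

lemma sum4sq_desc:
  fixes y0 y1 y2 y3 :: int
  shows "2^(2*m+3) dvd (y0^2 + y1^2 + y2^2 + y3^2) \<Longrightarrow>
    2^(m+1) dvd y0 \<and> 2^(m+1) dvd y1 \<and> 2^(m+1) dvd y2 \<and> 2^(m+1) dvd y3"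
proof (induction m arbitrary: y0 y1 y2 y3)
  case 0
  then show ?case using sum4sq8[of y0 y1 y2 y3] by simp
next
  case (Suc m)
  have "(8::int) dvd 2^(2 * Suc m + 3)" by (simp add: power_add)
  then have "8 dvd (y0^2 + y1^2 + y2^2 + y3^2)" using Suc.prems dvd_trans by blast
  then have "even y0 \<and> even y1 \<and> even y2 \<and> even y3" by (rule sum4sq8)
  then obtain z0 z1 z2 z3 where z: "y0 = 2*z0" "y1 = 2*z1" "y2 = 2*z2" "y3 = 2*z3"
    by (auto elim!: evenE)
  have "4 * 2^(2*m+3) dvd 4 * (z0^2 + z1^2 + z2^2 + z3^2)"
    using Suc.prems unfolding z by (simp add: power_mult_distrib power_add algebra_simps)
  then have "2^(2*m+3) dvd (z0^2 + z1^2 + z2^2 + z3^2)"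
    by (subst (asm) dvd_times_left_cancel_iff) simp_all
  then have "2^(m+1) dvd z0 \<and> 2^(m+1) dvd z1 \<and> 2^(m+1) dvd z2 \<and> 2^(m+1) dvd z3" by (rule Suc.IH)
  moreover have h: "2^(Suc m + 1) dvd 2 * w" if "2^(m+1) dvd w" for w :: int
  proof -
    from that obtain c where "w = 2^(m+1) * c" by (elim dvdE)
    then have "2 * w = 2^(Suc m + 1) * c" by simp
    then show ?thesis by simp
  qed
  ultimately show ?case unfolding z by blast
qed

lemma common_denom:
  "finite (F::real set) \<Longrightarrow> F \<subseteq> \<rat> \<Longrightarrow> \<exists>M::int. M > 0 \<and> (\<forall>x\<in>F. of_int M * x \<in> \<int>)"
proof (induction F rule: finite_induct)
  case empty
  show ?case by (intro exI[of _ 1]) simp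
next
  case (insert x F)
  then obtain M where M: "M > 0" "\<forall>y\<in>F. of_int M * y \<in> \<int>" by auto
  from insert.prems have "x \<in> \<rat>" by simp
  then obtain p q where pq: "q > 0" "x = of_int p / of_int q" by (rule Rats_cases') auto
  show ?case
  proof (intro exI[of _ "M * q"] conjI ballI)
    show "M * q > 0" using M pq by simp
    fix y assume "y \<in> insert x F"
    then show "of_int (M * q) * y \<in> \<int>"
    proof
      assume "y = x"
      have qx: "of_int q * x = (of_int p :: real)" using pq by simp
      have "of_int (M * q) * y = of_int M * (of_int q * x)" using \<open>y = x\<close> by simp
      also have "\<dots> = of_int (M * p)" using qx by simp
      finally have eq: "of_int (M * q) * y = (of_int (M * p) :: real)" .
      show ?thesis unfolding eq by (rule Ints_of_int)
    next
      assume "y \<in> F"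
      then have "of_int M * y \<in> \<int>" using M by simp
      then have "of_int q * (of_int M * y) \<in> \<int>" by (rule Ints_mult[OF Ints_of_int])
      then show ?thesis by (simp add: algebra_simps)
    qed
  qed
qed

definition bnrd :: "int \<Rightarrow> int \<Rightarrow> real^4 \<Rightarrow> real^4 \<Rightarrow> real" where
  "bnrd a b x y = x$1*y$1 - of_int a * x$2 * y$2 - of_int b * x$3 * y$3 + of_int a * of_int b * x$4 * y$4"

lemma bnrd_nrd: "bnrd a b x x = nrd a b x"
  by (simp add: bnrd_def nrd_def power2_eq_square algebra_simps)

lemma bnrd_sym: "bnrd a b x y = bnrd a b y x"
  by (simp add: bnrd_def algebra_simps)

lemma bnrd_add: "bnrd a b (x + y) z = bnrd a b x z + bnrd a b y z"
  by (simp add: bnrd_def algebra_simps)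

lemma bnrd_scale: "bnrd a b (c *\<^sub>R x) z = c * bnrd a b x z"
  by (simp add: bnrd_def algebra_simps)

lemma bilinear_bnrd: "bilinear (bnrd a b)"
  unfolding bilinear_def
proof (intro conjI allI)
  fix x
  show "linear (bnrd a b x)"
    by (rule linearI) (simp_all add: bnrd_sym[of a b x] bnrd_add bnrd_scale)
next
  fix y
  show "linear (\<lambda>x. bnrd a b x y)"
    by (rule linearI) (simp_all add: bnrd_add bnrd_scale)
qed

lemma nrd_pos:
  assumes a: "a < 0" and b: "b < 0" and x: "x \<noteq> 0"
  shows "nrd a b x > 0"
proof -
  have t1: "0 \<le> (x$1)^2" and t2: "0 \<le> - of_int a * (x$2)^2" and t3: "0 \<le> - of_int b * (x$3)^2"
    and t4: "0 \<le> of_int a * of_int b * (x$4)^2"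
    using a b by (auto intro!: mult_nonneg_nonneg mult_nonpos_nonneg simp: mult_nonpos_nonpos)
  have e: "nrd a b x = (x$1)^2 + (- of_int a * (x$2)^2) + (- of_int b * (x$3)^2) + of_int a * of_int b * (x$4)^2"
    by (simp add: nrd_def)
  from x obtain n where n: "x$n \<noteq> 0" by (auto simp: vec_eq_iff)
  have ab: "(0::real) < of_int a * of_int b" using a b by (simp add: mult_neg_neg)
  consider "n = 1" | "n = 2" | "n = 3" | "n = 4" using exhaust_4 by blast
  then show ?thesis
  proof cases
    case 1 then have "0 < (x$1)^2" using n by simp
    then show ?thesis using e t2 t3 t4 by linarith
  next
    case 2 then have "0 < - of_int a * (x$2)^2" using n a by (intro mult_pos_pos) auto
    then show ?thesis using e t1 t3 t4 by linarith
  next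
    case 3 then have "0 < - of_int b * (x$3)^2" using n b by (intro mult_pos_pos) auto
    then show ?thesis using e t1 t2 t4 by linarith
  next
    case 4 then have "0 < (x$4)^2" using n by simp
    then have "0 < of_int a * of_int b * (x$4)^2" using ab by (rule mult_pos_pos[rotated])
    then show ?thesis using e t1 t2 t3 by linarith
  qed
qed

lemma no_orth4:
  fixes a b :: int and w :: "nat \<Rightarrow> real^4"
  assumes a: "a < 0" and b: "b < 0" and sp: "splits_at a b 2"
    and rat: "\<And>i n. i < 4 \<Longrightarrow> w i $ n \<in> \<rat>"
    and nz: "\<And>i. i < 4 \<Longrightarrow> w i \<noteq> 0"
    and eqn: "\<And>i. i < 4 \<Longrightarrow> nrd a b (w i) = nrd a b (w 3)"
    and orth: "\<And>i l. i < 4 \<Longrightarrow> l < 4 \<Longrightarrow> i \<noteq> l \<Longrightarrow> bnrd a b (w i) (w l) = 0"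
  shows False
proof -
  define D where "D = nrd a b (w 3)"
  have Dpos: "D > 0" unfolding D_def using nrd_pos[OF a b nz[of 3]] by simp
  have B: "bnrd a b (w i) (w l) = (if i = l then D else 0)" if "i < 4" "l < 4" for i l
    using orth[OF that] eqn[OF that(1)] by (auto simp: bnrd_nrd D_def)
  define \<phi> where "\<phi> = (\<lambda>t::real^4. t$1 *\<^sub>R w 0 + t$2 *\<^sub>R w 1 + t$3 *\<^sub>R w 2 + t$4 *\<^sub>R w 3)"
  have lin: "linear \<phi>"
    by (rule linearI) (simp_all add: \<phi>_def algebra_simps scaleR_add_right)
  have pr: "bnrd a b (\<phi> t) (w 0) = t$1 * D" "bnrd a b (\<phi> t) (w 1) = t$2 * D"
    "bnrd a b (\<phi> t) (w 2) = t$3 * D" "bnrd a b (\<phi> t) (w 3) = t$4 * D" for t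
    by (simp_all add: \<phi>_def bnrd_add bnrd_scale B)
  have inj: "inj \<phi>"
  proof (rule injI)
    fix s t assume st: "\<phi> s = \<phi> t"
    have "s$1 * D = t$1 * D" "s$2 * D = t$2 * D" "s$3 * D = t$3 * D" "s$4 * D = t$4 * D"
      using pr[of s] pr[of t] st by metis+
    then show "s = t" using Dpos by (simp add: vec_eq_iff forall_4)
  qed
  have surj: "surj \<phi>" by (rule linear_injective_imp_surjective[OF lin inj]) simp
  define F where "F = (\<lambda>(i, n). w i $ n) ` ({..<4::nat} \<times> (UNIV :: 4 set))"
  have "finite F" "F \<subseteq> \<rat>" using rat by (auto simp: F_def)
  then obtain M :: int where M: "M > 0" "\<forall>y\<in>F. of_int M * y \<in> \<int>" using common_denom by blast
  have "\<forall>p. \<exists>z::int. fst p < 4 \<longrightarrow> of_int M * w (fst p) $ snd p = of_int z"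
  proof
    fix p :: "nat \<times> 4"
    show "\<exists>z::int. fst p < 4 \<longrightarrow> of_int M * w (fst p) $ snd p = of_int z"
    proof (cases "fst p < 4")
      case True
      then have "w (fst p) $ snd p \<in> F" unfolding F_def by (intro image_eqI[of _ _ p]) (auto simp: case_prod_beta mem_Times_iff)
      then have "of_int M * w (fst p) $ snd p \<in> \<int>" using M by simp
      then show ?thesis by (auto elim!: Ints_cases)
    qed simp
  qed
  then obtain W' where W': "\<And>p. fst p < 4 \<Longrightarrow> of_int M * w (fst p) $ snd p = of_int (W' p)"
    by metis
  define W where "W = (\<lambda>i n. W' (i, n))"
  have Wr: "w i $ n = of_int (W i n) / of_int M" if "i < 4" for i n
    using W'[of "(i, n)"] that M(1) by (simp add: W_def field_simps)
  define E where "E = (W 3 1)^2 - a * (W 3 2)^2 - b * (W 3 3)^2 + a * b * (W 3 4)^2"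
  have ED: "of_int E = of_int M ^ 2 * D"
    using M(1) by (simp add: E_def D_def nrd_def Wr field_simps)
  have Epos: "E > 0"
  proof -
    have "(0::real) < of_int M ^ 2 * D" using M(1) Dpos by simp
    then show ?thesis using ED by linarith
  qed
  define m where "m = nat E"
  from sp obtain x y z :: int where xyz: "\<not> (2 dvd x \<and> 2 dvd y \<and> 2 dvd z)"
    "[a * x^2 + b * y^2 = z^2] (mod 2^(2*m+3))"
    unfolding splits_at_def by blast
  define N where "N = z^2 - a * x^2 - b * y^2"
  have Ndvd: "2^(2*m+3) dvd N"
  proof -
    have "2^(2*m+3) dvd (a * x^2 + b * y^2 - z^2)" using xyz(2) by (simp add: cong_iff_dvd_diff)
    then have "2^(2*m+3) dvd - (a * x^2 + b * y^2 - z^2)" by (simp only: dvd_minus_iff)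
    then show ?thesis by (simp add: N_def algebra_simps)
  qed
  define q :: "real^4" where "q = (\<chi> j. if j = 1 then of_int z else if j = 2 then of_int x else if j = 3 then of_int y else 0)"
  have q1: "q$1 = of_int z" and q2: "q$2 = of_int x" and q3: "q$3 = of_int y" and q4: "q$4 = 0"
    by (simp_all add: q_def)
  obtain t where t: "\<phi> t = q" using surj by (metis surjD)
  define Y where "Y = (\<lambda>i. z * W i 1 - a * x * W i 2 - b * y * W i 3)"
  have Yq: "of_int (Y i) = of_int M * bnrd a b q (w i)" if "i < 4" for i
    using M(1) that by (simp add: Y_def bnrd_def q1 q2 q3 q4 Wr field_simps)
  have Y0: "of_int (Y 0) = of_int M * (t$1 * D)" using Yq[of 0] pr(1)[of t] t by simp
  have Y1: "of_int (Y 1) = of_int M * (t$2 * D)" using Yq[of 1] pr(2)[of t] t by simp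
  have Y1s: "of_int (Y (Suc 0)) = of_int M * (t$2 * D)" using Y1 by simp
  have Y2: "of_int (Y 2) = of_int M * (t$3 * D)" using Yq[of 2] pr(3)[of t] t by simp
  have Y3: "of_int (Y 3) = of_int M * (t$4 * D)" using Yq[of 3] pr(4)[of t] t by simp
  have Nq: "of_int N = nrd a b q" by (simp add: N_def nrd_def q1 q2 q3 q4)
  have "nrd a b q = bnrd a b (\<phi> t) q" using t by (simp add: bnrd_nrd)
  also have "\<dots> = t$1 * bnrd a b q (w 0) + t$2 * bnrd a b q (w 1) + t$3 * bnrd a b q (w 2) + t$4 * bnrd a b q (w 3)"
    by (simp add: \<phi>_def bnrd_add bnrd_scale bnrd_sym[of a b _ q])
  also have "\<dots> = D * ((t$1)^2 + (t$2)^2 + (t$3)^2 + (t$4)^2)"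
    using pr[of t] t by (simp add: power2_eq_square algebra_simps)
  finally have NqD: "of_int N = D * ((t$1)^2 + (t$2)^2 + (t$3)^2 + (t$4)^2)" using Nq by simp
  have "real_of_int ((Y 0)^2 + (Y 1)^2 + (Y 2)^2 + (Y 3)^2) = real_of_int (E * N)"
    by (simp add: Y0 Y1 Y1s Y2 Y3 ED NqD power2_eq_square algebra_simps)
  then have sumY: "(Y 0)^2 + (Y 1)^2 + (Y 2)^2 + (Y 3)^2 = E * N" by (simp only: of_int_eq_iff)
  have "2^(2*m+3) dvd ((Y 0)^2 + (Y 1)^2 + (Y 2)^2 + (Y 3)^2)" unfolding sumY using Ndvd by simp
  then have Ydvd: "2^(m+1) dvd Y 0 \<and> 2^(m+1) dvd Y 1 \<and> 2^(m+1) dvd Y 2 \<and> 2^(m+1) dvd Y 3"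
    by (rule sum4sq_desc)
  have coord: "E * c = Y 0 * W 0 n + Y 1 * W 1 n + Y 2 * W 2 n + Y 3 * W 3 n"
    if "q $ n = of_int c" for n c
  proof -
    have "real_of_int (E * c) = of_int M ^ 2 * D * q $ n" using that ED by simp
    also have "\<dots> = of_int M ^ 2 * D * (\<phi> t) $ n" using t by simp
    also have "\<dots> = real_of_int (Y 0 * W 0 n + Y 1 * W 1 n + Y 2 * W 2 n + Y 3 * W 3 n)"
      using M(1) by (simp add: \<phi>_def Y0 Y1 Y1s Y2 Y3 Wr field_simps power2_eq_square)
    finally show ?thesis by (simp only: of_int_eq_iff)
  qed
  have cdvd: "2^(m+1) dvd E * c" if "q $ n = of_int c" for n c
    unfolding coord[OF that] using Ydvd by (intro dvd_add dvd_mult2) auto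
  have "2^(m+1) dvd E"
  proof -
    from xyz(1) obtain c n where cn: "q $ n = of_int c" "odd c"
      using q1 q2 q3 by blast
    have "2^(m+1) dvd E * c" by (rule cdvd[OF cn(1)])
    moreover have "coprime (2^(m+1)) c" using cn(2) by simp
    ultimately show ?thesis using coprime_dvd_mult_left_iff by blast
  qed
  then have "2^(m+1) \<le> E" using Epos by (simp add: zdvd_imp_le)
  moreover have "E < 2^(m+1)"
  proof -
    have "m < 2^m" by (rule less_exp)
    then have "int m < 2^(m+1)" by (metis of_nat_less_iff less_exp of_nat_numeral of_nat_power power_Suc less_trans lessI mult_2 trans_less_add1 Suc_eq_plus1)
    then show ?thesis using Epos by (simp add: m_def)
  qed
  ultimately show False by simp
qed

context smin begin
lemma basis:
  assumes "\<And>x. x \<in> L \<Longrightarrow> \<exists>c. x = (\<Sum>i<k. real_of_int (c i) *\<^sub>R v i)"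
  shows "is_basis_of L k v"
  unfolding is_basis_of_def
proof (intro conjI allI impI)
  show "v i \<in> L" if "i < k" for i using vL that by simp
  show "zindep k v" by (rule vind)
  show "L = {\<Sum>i<k. real_of_int (c i) *\<^sub>R v i |c. True}"
  proof
    show "L \<subseteq> {\<Sum>i<k. real_of_int (c i) *\<^sub>R v i |c. True}" using assms by blast
    show "{\<Sum>i<k. real_of_int (c i) *\<^sub>R v i |c. True} \<subseteq> L"
      using vL unfolding Ldef by (auto intro!: zl_comb)
  qed
qed
end

lemma part1:
  fixes L :: "'v::real_vector set"
  assumes k3: "k \<le> 3" and lr: "lattice_rank L k" and pq: "pos_def_qf L Q" and at: "attains_succ_min L Q k v"
  shows "is_basis_of L k v"
proof -
  obtain b where b: "L = {(\<Sum>i<k. real_of_int (c i) *\<^sub>R b i) | c. True}"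
    using lr unfolding lattice_rank_def by blast
  obtain \<beta> where bil: "bilinear \<beta>" and Qd: "\<And>x. Q x = \<beta> x x" and ps: "\<forall>x\<in>span L. x \<noteq> 0 \<longrightarrow> Q x > 0"
    using pq unfolding pos_def_qf_def by blast
  interpret smin L Q k v b \<beta>
  proof
    show "L = zl k b" using b by (simp add: zl_def)
    show "bilinear \<beta>" by (rule bil)
    show "Q x = \<beta> x x" for x by (rule Qd)
    show "x \<in> L \<Longrightarrow> x \<noteq> 0 \<Longrightarrow> Q x > 0" for x using ps span_base by blast
    show "i < k \<Longrightarrow> v i \<in> L" for i using at by (simp add: attains_succ_min_def)
    show "zindep k v" using at by (simp add: attains_succ_min_def)
    show "i < k \<Longrightarrow> is_succ_min L Q (Suc i) (Q (v i))" for i using at by (simp add: attains_succ_min_def)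
  qed
  show ?thesis
  proof (rule basis)
    fix x assume "x \<in> L"
    have "k \<le> 4" using k3 by simp
    from main[OF this \<open>x \<in> L\<close>] have "(\<exists>c. x = (\<Sum>i<k. real_of_int (c i) *\<^sub>R v i)) \<or> k = 4" by blast
    moreover have "k \<noteq> 4" using k3 by simp
    ultimately show "\<exists>c. x = (\<Sum>i<k. real_of_int (c i) *\<^sub>R v i)" by blast
  qed
qed

lemma part2:
  fixes p a b :: int and R :: "(real^4) set"
  assumes p: "prime p" "odd p" and ram: "ramified_exactly_at a b p" and ord: "is_order a b R"
    and at: "attains_succ_min R (nrd a b) 4 v"
  shows "is_basis_of R 4 v"
proof -
  have a: "a < 0" and b: "b < 0" using ram by (auto simp: ramified_exactly_at_def)
  have "2 \<noteq> p" using p(2) by auto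
  moreover have "prime (2::int)" by simp
  ultimately have sp: "splits_at a b 2" using ram unfolding ramified_exactly_at_def by blast
  obtain bb where bb: "R = {(\<Sum>i<(4::nat). real_of_int (c i) *\<^sub>R bb i) | c. True}"
    using ord unfolding is_order_def lattice_rank_def by blast
  have ratR: "\<And>x n. x \<in> R \<Longrightarrow> x $ n \<in> \<rat>" using ord by (auto simp: is_order_def)
  interpret smin R "nrd a b" 4 v bb "bnrd a b"
  proof
    show "R = zl 4 bb" using bb by (simp add: zl_def)
    show "bilinear (bnrd a b)" by (rule bilinear_bnrd)
    show "nrd a b x = bnrd a b x x" for x by (simp add: bnrd_nrd)
    show "x \<in> R \<Longrightarrow> x \<noteq> 0 \<Longrightarrow> nrd a b x > 0" for x using nrd_pos[OF a b] by blast
    show "i < 4 \<Longrightarrow> v i \<in> R" for i using at by (simp add: attains_succ_min_def)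
    show "zindep 4 v" using at by (simp add: attains_succ_min_def)
    show "i < 4 \<Longrightarrow> is_succ_min R (nrd a b) (Suc i) (nrd a b (v i))" for i using at by (simp add: attains_succ_min_def)
  qed
  show ?thesis
  proof (rule basis)
    fix x assume xR: "x \<in> R"
    show "\<exists>c. x = (\<Sum>i<4. real_of_int (c i) *\<^sub>R v i)"
    proof (rule ccontr)
      assume nc: "\<not> ?thesis"
      have spall: "(\<forall>i<4. nrd a b (v i) = nrd a b (v 3)) \<and>
        (\<forall>i<4. \<forall>l<4. i \<noteq> l \<longrightarrow> bnrd a b (v i) (v l) + bnrd a b (v l) (v i) = 0)"
        using main[OF order.refl xR] nc by blast
      then have sp4: "(\<forall>i<4. nrd a b (v i) = nrd a b (v 3))"
        "\<forall>i<4. \<forall>l<4. i \<noteq> l \<longrightarrow> bnrd a b (v i) (v l) + bnrd a b (v l) (v i) = 0"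
        by (rule conjunct1, rule conjunct2)
      show False
      proof (rule no_orth4[OF a b sp])
        show "v i $ n \<in> \<rat>" if "i < 4" for i n using ratR vL that by blast
        show "v i \<noteq> 0" if "i < 4" for i using v_nz that by simp
        show "nrd a b (v i) = nrd a b (v 3)" if "i < 4" for i using sp4(1) that by blast
        show "bnrd a b (v i) (v l) = 0" if "i < 4" "l < 4" "i \<noteq> l" for i l
        proof -
          have "bnrd a b (v i) (v l) + bnrd a b (v l) (v i) = 0" using sp4(2) that by blast
          then show ?thesis using bnrd_sym[of a b "v l" "v i"] by simp
        qed
      qed
    qed
  qed
qed

theorem lemma3p4:
  shows "(\<forall>(L::'v::real_vector set) Q k v.
            k \<le> 3 \<and> lattice_rank L k \<and> pos_def_qf L Q \<and> attains_succ_min L Q k v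
            \<longrightarrow> is_basis_of L k v)
       \<and> (\<forall>(p::int) (a::int) (b::int) (R::(real^4) set) v.
            prime p \<and> odd p \<and> ramified_exactly_at a b p \<and> is_order a b R
            \<and> attains_succ_min R (nrd a b) 4 v
            \<longrightarrow> is_basis_of R 4 v)"
  using part1 part2 by blast

end
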